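(* For every pair of integers $n\ge 2$ and $1\le r\le n-1$, let $s:=\min\{r,n-r\}$. Then \[ \mathcal{K}^{\mathsf{TJ}}(J(n,r))= \begin{cases} \{k:k\ge 1\}, & s=1,\\ \{s\}, & s\ge 2\text{ and }n=2s,\\ \{s,n-s\}, & s\ge 2\text{ and }n>2s. \end{cases} \]
   Context: All graphs are finite, simple, undirected. A $k$-clique of a graph $H$ is a set of $k$ pairwise adjacent vertices. For a graph $H$ and integer $k\ge1$, the Token Jumping graph $\mathsf{TJ}_k(H)$ has as vertices the $k$-cliques of $H$, and two $k$-cliques $A,B$ are adjacent iff $|A\cap B|=k-1$. For a graph $G$, $\mathcal{K}^{\mathsf{TJ}}(G)=\{k\ge1:\ \exists\text{ a graph }H\text{ with }\mathsf{TJ}_k(H)\cong G\}$. The Johnson graph $J(n,r)$ has as vertices the $r$-subsets of $\{1,\dots,n\}$, two being adjacent iff their intersection has size $r-1$. *)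

theory Defs
  imports Main
begin

definition is_graph :: "'a set \<Rightarrow> 'a set set \<Rightarrow> bool" where
  "is_graph V E \<longleftrightarrow> finite V \<and> (\<forall>e\<in>E. e \<subseteq> V \<and> card e = 2)"

definition graph_iso :: "'a set \<Rightarrow> 'a set set \<Rightarrow> 'b set \<Rightarrow> 'b set set \<Rightarrow> bool" where
  "graph_iso V1 E1 V2 E2 \<longleftrightarrow>
     (\<exists>f. bij_betw f V1 V2 \<and> (\<forall>x\<in>V1. \<forall>y\<in>V1. {x, y} \<in> E1 \<longleftrightarrow> {f x, f y} \<in> E2))"

definition cliques :: "'a set \<Rightarrow> 'a set set \<Rightarrow> nat \<Rightarrow> 'a set set" where
  "cliques V E k = {A. A \<subseteq> V \<and> card A = k \<and> (\<forall>x\<in>A. \<forall>y\<in>A. x \<noteq> y \<longrightarrow> {x, y} \<in> E)}"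

definition TJ_V :: "'a set \<Rightarrow> 'a set set \<Rightarrow> nat \<Rightarrow> 'a set set" where
  "TJ_V V E k = cliques V E k"

definition TJ_E :: "'a set \<Rightarrow> 'a set set \<Rightarrow> nat \<Rightarrow> 'a set set set" where
  "TJ_E V E k = {{A, B} | A B. A \<in> cliques V E k \<and> B \<in> cliques V E k \<and> A \<noteq> B
                               \<and> card (A \<inter> B) = k - 1}"

text \<open>K^TJ(G). Host graphs H are taken on vertex type nat; every finite graph is
  isomorphic to one on nat vertices, so this is no loss.\<close>
definition K_TJ :: "'b set \<Rightarrow> 'b set set \<Rightarrow> nat set" where
  "K_TJ V E = {k. k \<ge> 1 \<and> (\<exists>(VH :: nat set) EH. is_graph VH EH \<and>
                    graph_iso (TJ_V VH EH k) (TJ_E VH EH k) V E)}"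

definition johnson_V :: "nat \<Rightarrow> nat \<Rightarrow> nat set set" where
  "johnson_V n r = {A. A \<subseteq> {1..n} \<and> card A = r}"

definition johnson_E :: "nat \<Rightarrow> nat \<Rightarrow> nat set set set" where
  "johnson_E n r = {{A, B} | A B. A \<in> johnson_V n r \<and> B \<in> johnson_V n r \<and> A \<noteq> B
                                 \<and> card (A \<inter> B) = r - 1}"

end

theory Submission
  imports Defs
begin


definition Kn :: "nat \<Rightarrow> nat set set" where
  "Kn n = {e. e \<subseteq> {1..n} \<and> card e = 2}"

definition adj :: "nat \<Rightarrow> 'a set \<Rightarrow> 'a set \<Rightarrow> bool" where
  "adj k A D \<longleftrightarrow> A \<noteq> D \<and> card (A \<inter> D) = k - 1"

lemma johnson_V_eq: "johnson_V n r = cliques {1..n} (Kn n) r"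
  unfolding johnson_V_def cliques_def Kn_def by (auto simp: card_2_iff)

lemma johnson_E_eq: "johnson_E n r = TJ_E {1..n} (Kn n) r"
  unfolding johnson_E_def TJ_E_def johnson_V_eq by simp

lemma TJ_E_iff:
  assumes "A \<in> cliques V E k" "B \<in> cliques V E k"
  shows "{A,B} \<in> TJ_E V E k \<longleftrightarrow> adj k A B"
  using assms unfolding TJ_E_def adj_def
  by (auto simp: doubleton_eq_iff Int_commute)

lemma graph_iso_TJ:
  "graph_iso (TJ_V V1 E1 k1) (TJ_E V1 E1 k1) (TJ_V V2 E2 k2) (TJ_E V2 E2 k2) \<longleftrightarrow>
   (\<exists>f. bij_betw f (cliques V1 E1 k1) (cliques V2 E2 k2) \<and>
     (\<forall>x\<in>cliques V1 E1 k1. \<forall>y\<in>cliques V1 E1 k1. adj k1 x y \<longleftrightarrow> adj k2 (f x) (f y)))"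
proof -
  have *: "bij_betw f (cliques V1 E1 k1) (cliques V2 E2 k2) \<Longrightarrow>
     (\<forall>x\<in>cliques V1 E1 k1. \<forall>y\<in>cliques V1 E1 k1. {x,y} \<in> TJ_E V1 E1 k1 \<longleftrightarrow> {f x, f y} \<in> TJ_E V2 E2 k2)
     \<longleftrightarrow> (\<forall>x\<in>cliques V1 E1 k1. \<forall>y\<in>cliques V1 E1 k1. adj k1 x y \<longleftrightarrow> adj k2 (f x) (f y))" for f
  proof -
    assume b: "bij_betw f (cliques V1 E1 k1) (cliques V2 E2 k2)"
    have "({x,y} \<in> TJ_E V1 E1 k1 \<longleftrightarrow> {f x, f y} \<in> TJ_E V2 E2 k2) \<longleftrightarrow> (adj k1 x y \<longleftrightarrow> adj k2 (f x) (f y))"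
      if "x \<in> cliques V1 E1 k1" "y \<in> cliques V1 E1 k1" for x y
    proof -
      have "f x \<in> cliques V2 E2 k2" "f y \<in> cliques V2 E2 k2" using b that bij_betw_apply by fast+
      then show ?thesis using that by (simp add: TJ_E_iff)
    qed
    then show ?thesis by blast
  qed
  show ?thesis unfolding graph_iso_def TJ_V_def using * by blast
qed

definition NN :: "('a \<Rightarrow> 'a \<Rightarrow> bool) \<Rightarrow> 'a set \<Rightarrow> 'a \<Rightarrow> 'a \<Rightarrow> 'a set" where
  "NN R W A B = {D\<in>W. R A D \<and> R B D}"
definition MM :: "('a \<Rightarrow> 'a \<Rightarrow> bool) \<Rightarrow> 'a set \<Rightarrow> 'a \<Rightarrow> 'a \<Rightarrow> 'a \<Rightarrow> 'a set" where
  "MM R W A B C = {D\<in>W. R A D \<and> R B D \<and> (D = C \<or> R C D)}"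

lemma iso_NN:
  assumes "bij_betw f W1 W2" "\<forall>x\<in>W1. \<forall>y\<in>W1. R1 x y \<longleftrightarrow> R2 (f x) (f y)" "A \<in> W1" "B \<in> W1"
  shows "f ` NN R1 W1 A B = NN R2 W2 (f A) (f B)"
proof
  show "f ` NN R1 W1 A B \<subseteq> NN R2 W2 (f A) (f B)"
    using assms unfolding NN_def bij_betw_def by auto
  show "NN R2 W2 (f A) (f B) \<subseteq> f ` NN R1 W1 A B"
  proof
    fix D' assume "D' \<in> NN R2 W2 (f A) (f B)"
    then obtain D where "D \<in> W1" "D' = f D" using assms(1) unfolding NN_def bij_betw_def by auto
    then show "D' \<in> f ` NN R1 W1 A B" using assms \<open>D' \<in> NN R2 W2 (f A) (f B)\<close>
      unfolding NN_def by auto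
  qed
qed

lemma iso_MM:
  assumes "bij_betw f W1 W2" "\<forall>x\<in>W1. \<forall>y\<in>W1. R1 x y \<longleftrightarrow> R2 (f x) (f y)" "A \<in> W1" "B \<in> W1" "C \<in> W1"
  shows "f ` MM R1 W1 A B C = MM R2 W2 (f A) (f B) (f C)"
proof
  have inj: "inj_on f W1" using assms(1) bij_betw_def by auto
  show "f ` MM R1 W1 A B C \<subseteq> MM R2 W2 (f A) (f B) (f C)"
    using assms unfolding MM_def bij_betw_def by auto
  show "MM R2 W2 (f A) (f B) (f C) \<subseteq> f ` MM R1 W1 A B C"
  proof
    fix D' assume D': "D' \<in> MM R2 W2 (f A) (f B) (f C)"
    then obtain D where D: "D \<in> W1" "D' = f D" using assms(1) unfolding MM_def bij_betw_def by auto
    have "f D = f C \<Longrightarrow> D = C" using inj D assms(5) inj_on_def by metis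
    then show "D' \<in> f ` MM R1 W1 A B C" using assms D D'
      unfolding MM_def by auto
  qed
qed

lemma iso_card_MM:
  assumes "bij_betw f W1 W2" "\<forall>x\<in>W1. \<forall>y\<in>W1. R1 x y \<longleftrightarrow> R2 (f x) (f y)" "A \<in> W1" "B \<in> W1" "C \<in> W1"
  shows "card (MM R2 W2 (f A) (f B) (f C)) = card (MM R1 W1 A B C)"
proof -
  have "inj_on f (MM R1 W1 A B C)" using assms(1) unfolding bij_betw_def MM_def
    by (auto intro: inj_on_subset)
  then show ?thesis using iso_MM[OF assms] card_image by metis
qed



lemma card_U:
  assumes "a \<notin> I" "b \<notin> I" "a \<noteq> b" "finite I" "card I + 1 = k"
  shows "card (insert a (insert b I)) = k + 1"
  using assms by simp

lemma Nchar:
  assumes "a \<notin> I" "b \<notin> I" "a \<noteq> b" "finite I" "card I + 1 = k"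
    and D: "card D = k" "adj k (insert a I) D" "adj k (insert b I) D"
  shows "(\<exists>x. x \<notin> insert a (insert b I) \<and> D = insert x I) \<or> (\<exists>y\<in>I. D = insert a (insert b I) - {y})"
proof (cases "I \<subseteq> D")
  case True
  have fD: "finite D" using D(1) assms(5) card_ge_0_finite by force
  have "a \<notin> D"
  proof
    assume "a \<in> D"
    then have "insert a I \<subseteq> D" using True by auto
    moreover have "card (insert a I) = card D" using assms D by simp
    ultimately have "insert a I = D" using fD card_subset_eq by blast
    then show False using D(2) unfolding adj_def by simp
  qed
  moreover have "b \<notin> D"
  proof
    assume "b \<in> D"
    then have "insert b I \<subseteq> D" using True by auto
    moreover have "card (insert b I) = card D" using assms D by simp
    ultimately have "insert b I = D" using fD card_subset_eq by blast
    then show False using D(3) unfolding adj_def by simp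
  qed
  moreover have "card (D - I) = 1" using True fD assms D by (simp add: card_Diff_subset)
  then obtain x where x: "D - I = {x}" using card_1_singletonE by blast
  ultimately have "x \<notin> insert a (insert b I)" "D = insert x I" using True by auto
  then show ?thesis by blast
next
  case False
  then obtain y where y: "y \<in> I" "y \<notin> D" by auto
  have fD: "finite D" using D(1) assms(5) card_ge_0_finite by force
  have 1: "insert a I \<inter> D = insert a I - {y}"
  proof (rule card_subset_eq)
    show "finite (insert a I - {y})" using assms by simp
    show "insert a I \<inter> D \<subseteq> insert a I - {y}" using y by auto
    show "card (insert a I \<inter> D) = card (insert a I - {y})"
      using D(2) assms y unfolding adj_def by simp
  qed
  have 2: "insert b I \<inter> D = insert b I - {y}"
  proof (rule card_subset_eq)
    show "finite (insert b I - {y})" using assms by simp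
    show "insert b I \<inter> D \<subseteq> insert b I - {y}" using y by auto
    show "card (insert b I \<inter> D) = card (insert b I - {y})"
      using D(3) assms y unfolding adj_def by simp
  qed
  have "insert a (insert b I) - {y} \<subseteq> D" using 1 2 by blast
  moreover have "card (insert a (insert b I) - {y}) = card D"
    using assms y D by (simp add: card_Diff_singleton)
  ultimately have "insert a (insert b I) - {y} = D" using fD card_subset_eq by blast
  then show ?thesis using y by blast
qed

lemma S_adj:
  assumes "a \<notin> I" "b \<notin> I" "a \<noteq> b" "finite I" "card I + 1 = k"
    and "x \<notin> insert a (insert b I)" "x' \<notin> insert a (insert b I)"
  shows "adj k (insert x I) (insert x' I) \<longleftrightarrow> x \<noteq> x'"
proof -
  have "x \<noteq> x' \<Longrightarrow> insert x I \<inter> insert x' I = I" using assms by auto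
  then show ?thesis using assms unfolding adj_def by (auto simp: insert_ident)
qed

lemma T_adj:
  assumes "a \<notin> I" "b \<notin> I" "a \<noteq> b" "finite I" "card I + 1 = k"
    and "y \<in> I" "y' \<in> I"
  shows "adj k (insert a (insert b I) - {y}) (insert a (insert b I) - {y'}) \<longleftrightarrow> y \<noteq> y'"
proof
  assume "adj k (insert a (insert b I) - {y}) (insert a (insert b I) - {y'})"
  then show "y \<noteq> y'" unfolding adj_def by auto
next
  assume ne: "y \<noteq> y'"
  have e: "(insert a (insert b I) - {y}) \<inter> (insert a (insert b I) - {y'}) = insert a (insert b I) - {y, y'}"
    by auto
  have "card (insert a (insert b I) - {y, y'}) = card (insert a (insert b I)) - card {y,y'}"
    using assms by (intro card_Diff_subset) auto
  then have "card (insert a (insert b I) - {y, y'}) = k - 1" using assms ne by simp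
  moreover have "insert a (insert b I) - {y} \<noteq> insert a (insert b I) - {y'}" using assms ne by auto
  ultimately show "adj k (insert a (insert b I) - {y}) (insert a (insert b I) - {y'})"
    unfolding adj_def using e by simp
qed

lemma ST_nadj:
  assumes "a \<notin> I" "b \<notin> I" "a \<noteq> b" "finite I" "card I + 1 = k"
    and "x \<notin> insert a (insert b I)" "y \<in> I"
  shows "\<not> adj k (insert x I) (insert a (insert b I) - {y})"
    "\<not> adj k (insert a (insert b I) - {y}) (insert x I)"
proof -
  have e: "insert x I \<inter> (insert a (insert b I) - {y}) = I - {y}" using assms by auto
  have "card (I - {y}) = k - 2" using assms by (simp add: card_Diff_singleton)
  moreover have "card I > 0" using assms card_gt_0_iff by blast
  then have "k \<ge> 2" using assms by simp
  moreover have e2: "(insert a (insert b I) - {y}) \<inter> insert x I = I - {y}" using e by blast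
  ultimately show "\<not> adj k (insert x I) (insert a (insert b I) - {y})"
    "\<not> adj k (insert a (insert b I) - {y}) (insert x I)"
    unfolding adj_def using e e2 by (simp_all, linarith+)
qed

lemma S_in_N:
  assumes "a \<notin> I" "b \<notin> I" "a \<noteq> b" "finite I" "card I + 1 = k"
    and "x \<notin> insert a (insert b I)"
  shows "adj k (insert a I) (insert x I)" "adj k (insert b I) (insert x I)"
proof -
  have "insert a I \<inter> insert x I = I" "insert b I \<inter> insert x I = I" using assms by auto
  then show "adj k (insert a I) (insert x I)" "adj k (insert b I) (insert x I)"
    using assms unfolding adj_def by auto
qed

lemma T_in_N:
  assumes "a \<notin> I" "b \<notin> I" "a \<noteq> b" "finite I" "card I + 1 = k"
    and "y \<in> I"
  shows "adj k (insert a I) (insert a (insert b I) - {y})" "adj k (insert b I) (insert a (insert b I) - {y})"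
proof -
  have "insert a I \<inter> (insert a (insert b I) - {y}) = insert a I - {y}"
     "insert b I \<inter> (insert a (insert b I) - {y}) = insert b I - {y}" using assms by auto
  moreover have "card (insert a I - {y}) = k - 1" "card (insert b I - {y}) = k - 1"
    using assms by (auto simp: card_Diff_singleton)
  moreover have "insert a I \<noteq> insert a (insert b I) - {y}" "insert b I \<noteq> insert a (insert b I) - {y}"
    using assms by auto
  ultimately show "adj k (insert a I) (insert a (insert b I) - {y})" "adj k (insert b I) (insert a (insert b I) - {y})"
    unfolding adj_def by auto
qed



lemma decomp:
  assumes "card A = k" "card B = k" "k \<ge> 1" "adj k A B"
  obtains a b I where "a \<notin> I" "b \<notin> I" "a \<noteq> b" "finite I" "card I + 1 = k"
    "A = insert a I" "B = insert b I"
proof -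
  have fA: "finite A" "finite B" using assms card_ge_0_finite by force+
  have cI: "card (A \<inter> B) = k - 1" using assms(4) unfolding adj_def by simp
  have "card (A - B) = 1" using fA cI assms by (simp add: card_Diff_subset_Int)
  then obtain a where a: "A - B = {a}" using card_1_singletonE by blast
  have "card (B - A) = 1" using fA cI assms by (simp add: card_Diff_subset_Int Int_commute)
  then obtain b where b: "B - A = {b}" using card_1_singletonE by blast
  have "A = insert a (A \<inter> B)" "B = insert b (A \<inter> B)" using a b by blast+
  moreover have "a \<notin> A \<inter> B" "b \<notin> A \<inter> B" "a \<noteq> b" using a b by blast+
  moreover have "finite (A \<inter> B)" "card (A \<inter> B) + 1 = k" using fA cI assms by auto
  ultimately show ?thesis using that by blast
qed

lemma M_S:
  assumes base: "a \<notin> I" "b \<notin> I" "a \<noteq> b" "finite I" "card I + 1 = k"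
    and W: "\<forall>D\<in>W. card D = k" and x: "x \<notin> insert a (insert b I)" "insert x I \<in> W"
  shows "MM (adj k) W (insert a I) (insert b I) (insert x I) =
         {D\<in>W. \<exists>x'. x' \<notin> insert a (insert b I) \<and> D = insert x' I}"
proof
  show "MM (adj k) W (insert a I) (insert b I) (insert x I) \<subseteq>
         {D\<in>W. \<exists>x'. x' \<notin> insert a (insert b I) \<and> D = insert x' I}"
  proof
    fix D assume D: "D \<in> MM (adj k) W (insert a I) (insert b I) (insert x I)"
    then have D1: "D \<in> W" "adj k (insert a I) D" "adj k (insert b I) D"
      "D = insert x I \<or> adj k (insert x I) D" unfolding MM_def by auto
    from Nchar[OF base W[rule_format, OF D1(1)] D1(2,3)]
    show "D \<in> {D\<in>W. \<exists>x'. x' \<notin> insert a (insert b I) \<and> D = insert x' I}"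
    proof
      assume "\<exists>y\<in>I. D = insert a (insert b I) - {y}"
      then obtain y where y: "y \<in> I" "D = insert a (insert b I) - {y}" by blast
      have "D \<noteq> insert x I" using y base x by auto
      moreover have "\<not> adj k (insert x I) D" using ST_nadj[OF base x(1) y(1)] y by simp
      ultimately show ?thesis using D1 by blast
    qed (use D1 in blast)
  qed
  show "{D\<in>W. \<exists>x'. x' \<notin> insert a (insert b I) \<and> D = insert x' I} \<subseteq>
     MM (adj k) W (insert a I) (insert b I) (insert x I)"
  proof
    fix D assume "D \<in> {D\<in>W. \<exists>x'. x' \<notin> insert a (insert b I) \<and> D = insert x' I}"
    then obtain x' where D: "D \<in> W" "x' \<notin> insert a (insert b I)" "D = insert x' I" by blast
    show "D \<in> MM (adj k) W (insert a I) (insert b I) (insert x I)"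
      unfolding MM_def using D S_in_N[OF base D(2)] S_adj[OF base x(1) D(2)] by auto
  qed
qed

lemma M_T:
  assumes base: "a \<notin> I" "b \<notin> I" "a \<noteq> b" "finite I" "card I + 1 = k"
    and W: "\<forall>D\<in>W. card D = k" and y: "y \<in> I" "insert a (insert b I) - {y} \<in> W"
  shows "MM (adj k) W (insert a I) (insert b I) (insert a (insert b I) - {y}) =
         {D\<in>W. \<exists>y'\<in>I. D = insert a (insert b I) - {y'}}"
proof
  show "MM (adj k) W (insert a I) (insert b I) (insert a (insert b I) - {y}) \<subseteq>
         {D\<in>W. \<exists>y'\<in>I. D = insert a (insert b I) - {y'}}"
  proof
    fix D assume D: "D \<in> MM (adj k) W (insert a I) (insert b I) (insert a (insert b I) - {y})"
    then have D1: "D \<in> W" "adj k (insert a I) D" "adj k (insert b I) D"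
      "D = insert a (insert b I) - {y} \<or> adj k (insert a (insert b I) - {y}) D" unfolding MM_def by auto
    from Nchar[OF base W[rule_format, OF D1(1)] D1(2,3)]
    show "D \<in> {D\<in>W. \<exists>y'\<in>I. D = insert a (insert b I) - {y'}}"
    proof
      assume "\<exists>x. x \<notin> insert a (insert b I) \<and> D = insert x I"
      then obtain x where x: "x \<notin> insert a (insert b I)" "D = insert x I" by blast
      have "D \<noteq> insert a (insert b I) - {y}" using y base x by auto
      moreover have "\<not> adj k (insert a (insert b I) - {y}) D" using ST_nadj[OF base x(1) y(1)] x by simp
      ultimately show ?thesis using D1 by blast
    qed (use D1 in blast)
  qed
  show "{D\<in>W. \<exists>y'\<in>I. D = insert a (insert b I) - {y'}} \<subseteq>
     MM (adj k) W (insert a I) (insert b I) (insert a (insert b I) - {y})"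
  proof
    fix D assume "D \<in> {D\<in>W. \<exists>y'\<in>I. D = insert a (insert b I) - {y'}}"
    then obtain y' where D: "D \<in> W" "y' \<in> I" "D = insert a (insert b I) - {y'}" by blast
    show "D \<in> MM (adj k) W (insert a I) (insert b I) (insert a (insert b I) - {y})"
      unfolding MM_def using D T_in_N[OF base D(2)] T_adj[OF base y(1) D(2)] by auto
  qed
qed

lemma card_T:
  assumes base: "a \<notin> I" "b \<notin> I" "a \<noteq> b" "finite I" "card I + 1 = k"
  shows "card ((\<lambda>y. insert a (insert b I) - {y}) ` I) = k - 1"
proof -
  have "inj_on (\<lambda>y. insert a (insert b I) - {y}) I"
    by (auto simp: inj_on_def)
  then show ?thesis using base card_image by fastforce
qed

lemma TJ_side:
  assumes base: "a \<notin> I" "b \<notin> I" "a \<noteq> b" "finite I" "card I + 1 = k"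
    and AB: "insert a I \<in> cliques V E k" "insert b I \<in> cliques V E k"
    and CD: "C \<in> NN (adj k) (cliques V E k) (insert a I) (insert b I)"
      "D \<in> NN (adj k) (cliques V E k) (insert a I) (insert b I)" "C \<noteq> D" "\<not> adj k C D"
  shows "\<exists>C\<in>NN (adj k) (cliques V E k) (insert a I) (insert b I).
           card (MM (adj k) (cliques V E k) (insert a I) (insert b I) C) = k - 1"
proof -
  let ?W = "cliques V E k"
  let ?U = "insert a (insert b I)"
  have W: "\<forall>D\<in>?W. card D = k" unfolding cliques_def by auto
  have C1: "C \<in> ?W" "adj k (insert a I) C" "adj k (insert b I) C"
    and D1: "D \<in> ?W" "adj k (insert a I) D" "adj k (insert b I) D" using CD unfolding NN_def by auto
  have "\<exists>y\<in>I. insert a (insert b I) - {y} \<in> ?W"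
  proof (rule ccontr)
    assume nT: "\<not> (\<exists>y\<in>I. insert a (insert b I) - {y} \<in> ?W)"
    have "\<exists>x. x \<notin> ?U \<and> C = insert x I"
      using Nchar[OF base W[rule_format, OF C1(1)] C1(2,3)] nT C1(1) by blast
    moreover have "\<exists>x. x \<notin> ?U \<and> D = insert x I"
      using Nchar[OF base W[rule_format, OF D1(1)] D1(2,3)] nT D1(1) by blast
    ultimately show False using S_adj[OF base] CD(3,4) by blast
  qed
  then obtain y where y: "y \<in> I" "?U - {y} \<in> ?W" by blast
  have "a \<in> ?U - {y}" "b \<in> ?U - {y}" using y base by auto
  then have ab: "{a, b} \<in> E" using y(2) base(3) unfolding cliques_def by blast
  have allT: "?U - {y'} \<in> ?W" if y': "y' \<in> I" for y'
  proof -
    have sub: "?U \<subseteq> V" using AB unfolding cliques_def by auto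
    have cd: "card (?U - {y'}) = k" using base y' by (simp add: card_Diff_singleton)
    have "{p, q} \<in> E" if pq: "p \<in> ?U - {y'}" "q \<in> ?U - {y'}" "p \<noteq> q" for p q
    proof -
      have A': "\<forall>x\<in>insert a I. \<forall>z\<in>insert a I. x \<noteq> z \<longrightarrow> {x, z} \<in> E"
        and B': "\<forall>x\<in>insert b I. \<forall>z\<in>insert b I. x \<noteq> z \<longrightarrow> {x, z} \<in> E"
        using AB unfolding cliques_def by auto
      show ?thesis
      proof (cases "p \<in> insert a I \<and> q \<in> insert a I")
        case True then show ?thesis using A' pq by blast
      next
        case F1: False
        show ?thesis
        proof (cases "p \<in> insert b I \<and> q \<in> insert b I")
          case True then show ?thesis using B' pq by blast
        next
          case False
          then have "(p = a \<and> q = b) \<or> (p = b \<and> q = a)" using F1 pq by auto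
          then show ?thesis using ab by (auto simp: insert_commute)
        qed
      qed
    qed
    then show ?thesis using sub cd unfolding cliques_def by auto
  qed
  have "MM (adj k) ?W (insert a I) (insert b I) (?U - {y}) = {D\<in>?W. \<exists>y'\<in>I. D = ?U - {y'}}"
    by (rule M_T[OF base W y])
  also have "\<dots> = (\<lambda>y. ?U - {y}) ` I" using allT by auto
  finally have "card (MM (adj k) ?W (insert a I) (insert b I) (?U - {y})) = k - 1"
    using card_T[OF base] by simp
  moreover have "?U - {y} \<in> NN (adj k) ?W (insert a I) (insert b I)"
    unfolding NN_def using y T_in_N[OF base y(1)] by auto
  ultimately show ?thesis by blast
qed



lemma cliques_Kn: "cliques {1..n} (Kn n) k = {D. D \<subseteq> {1..n} \<and> card D = k}"
  using johnson_V_eq[of n k] unfolding johnson_V_def by simp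

lemma J_side:
  assumes base: "a \<notin> I" "b \<notin> I" "a \<noteq> b" "finite I" "card I + 1 = k"
    and AB: "insert a I \<in> cliques {1..n} (Kn n) k" "insert b I \<in> cliques {1..n} (Kn n) k"
    and kn: "2 \<le> k" "k + 2 \<le> n"
  shows "\<forall>C\<in>NN (adj k) (cliques {1..n} (Kn n) k) (insert a I) (insert b I).
           card (MM (adj k) (cliques {1..n} (Kn n) k) (insert a I) (insert b I) C) = n - k - 1
         \<or> card (MM (adj k) (cliques {1..n} (Kn n) k) (insert a I) (insert b I) C) = k - 1"
    "\<exists>C\<in>NN (adj k) (cliques {1..n} (Kn n) k) (insert a I) (insert b I).
       \<exists>D\<in>NN (adj k) (cliques {1..n} (Kn n) k) (insert a I) (insert b I). C \<noteq> D \<and> \<not> adj k C D"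
proof -
  let ?W = "cliques {1..n} (Kn n) k"
  let ?U = "insert a (insert b I)"
  have W: "\<forall>D\<in>?W. card D = k" unfolding cliques_def by auto
  have Usub: "?U \<subseteq> {1..n}" using AB unfolding cliques_Kn by auto
  have cU: "card ?U = k + 1" using base by simp
  have Sin: "insert x I \<in> ?W" if "x \<in> {1..n} - ?U" for x
  proof -
    have "insert x I \<subseteq> {1..n}" using that Usub by blast
    moreover have "card (insert x I) = k" using that base by simp
    ultimately show ?thesis unfolding cliques_Kn by blast
  qed
  have Tin: "?U - {y} \<in> ?W" if "y \<in> I" for y
  proof -
    have "?U - {y} \<subseteq> {1..n}" using that Usub by blast
    moreover have "card (?U - {y}) = k" using that base cU by (simp add: card_Diff_singleton)
    ultimately show ?thesis unfolding cliques_Kn by blast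
  qed
  have Sset: "{D\<in>?W. \<exists>x'. x' \<notin> ?U \<and> D = insert x' I} = (\<lambda>x. insert x I) ` ({1..n} - ?U)"
  proof
    show "{D\<in>?W. \<exists>x'. x' \<notin> ?U \<and> D = insert x' I} \<subseteq> (\<lambda>x. insert x I) ` ({1..n} - ?U)"
    proof
      fix D assume "D \<in> {D\<in>?W. \<exists>x'. x' \<notin> ?U \<and> D = insert x' I}"
      then obtain x' where "D \<in> ?W" "x' \<notin> ?U" "D = insert x' I" by blast
      moreover then have "x' \<in> {1..n}" unfolding cliques_Kn by blast
      ultimately show "D \<in> (\<lambda>x. insert x I) ` ({1..n} - ?U)" by blast
    qed
    show "(\<lambda>x. insert x I) ` ({1..n} - ?U) \<subseteq> {D\<in>?W. \<exists>x'. x' \<notin> ?U \<and> D = insert x' I}"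
      using Sin by blast
  qed
  have Tset: "{D\<in>?W. \<exists>y'\<in>I. D = ?U - {y'}} = (\<lambda>y. ?U - {y}) ` I"
    using Tin by blast
  have cS: "card ((\<lambda>x. insert x I) ` ({1..n} - ?U)) = n - k - 1"
  proof -
    have "inj_on (\<lambda>x. insert x I) ({1..n} - ?U)" unfolding inj_on_def by blast
    then have "card ((\<lambda>x. insert x I) ` ({1..n} - ?U)) = card ({1..n} - ?U)" by (rule card_image)
    also have "\<dots> = card {1..n} - card ?U" using Usub by (intro card_Diff_subset) (auto intro: finite_subset)
    also have "\<dots> = n - (k + 1)" using cU by simp
    finally show ?thesis by simp
  qed
  have cT: "card ((\<lambda>y. ?U - {y}) ` I) = k - 1" by (rule card_T[OF base])
  show "\<forall>C\<in>NN (adj k) ?W (insert a I) (insert b I).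
           card (MM (adj k) ?W (insert a I) (insert b I) C) = n - k - 1
         \<or> card (MM (adj k) ?W (insert a I) (insert b I) C) = k - 1"
  proof
    fix C assume C: "C \<in> NN (adj k) ?W (insert a I) (insert b I)"
    then have C1: "C \<in> ?W" "adj k (insert a I) C" "adj k (insert b I) C" unfolding NN_def by auto
    from Nchar[OF base W[rule_format, OF C1(1)] C1(2,3)]
    show "card (MM (adj k) ?W (insert a I) (insert b I) C) = n - k - 1
         \<or> card (MM (adj k) ?W (insert a I) (insert b I) C) = k - 1"
    proof
      assume "\<exists>x. x \<notin> ?U \<and> C = insert x I"
      then obtain x where x: "x \<notin> ?U" "C = insert x I" by blast
      have "MM (adj k) ?W (insert a I) (insert b I) C = (\<lambda>x. insert x I) ` ({1..n} - ?U)"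
        using M_S[OF base W x(1)] C1(1) x(2) Sset by simp
      then show ?thesis using cS by simp
    next
      assume "\<exists>y\<in>I. C = ?U - {y}"
      then obtain y where y: "y \<in> I" "C = ?U - {y}" by blast
      have "MM (adj k) ?W (insert a I) (insert b I) C = (\<lambda>y. ?U - {y}) ` I"
        using M_T[OF base W y(1)] C1(1) y(2) Tset by simp
      then show ?thesis using cT by simp
    qed
  qed
  have "card ({1..n} - ?U) = card {1..n} - card ?U" using Usub by (intro card_Diff_subset) (auto intro: finite_subset)
  then have "card ({1..n} - ?U) > 0" using cU kn by simp
  then have "{1..n} - ?U \<noteq> {}" by (rule card_gt_0_iff[THEN iffD1, THEN conjunct1])
  then obtain x where x: "x \<in> {1..n} - ?U" by blast
  have "card I > 0" using base kn by simp
  then have "I \<noteq> {}" by (rule card_gt_0_iff[THEN iffD1, THEN conjunct1])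
  then obtain y where y: "y \<in> I" by blast
  have x': "x \<notin> ?U" using x by blast
  have n1: "insert x I \<in> NN (adj k) ?W (insert a I) (insert b I)"
    unfolding NN_def using Sin[OF x] S_in_N[OF base x'] by auto
  have n2: "?U - {y} \<in> NN (adj k) ?W (insert a I) (insert b I)"
    unfolding NN_def using Tin[OF y] T_in_N[OF base y] by auto
  have ne: "insert x I \<noteq> ?U - {y}"
  proof -
    have "b \<in> ?U - {y}" using base y by blast
    moreover have "b \<notin> insert x I" using base x by blast
    ultimately show ?thesis by blast
  qed
  have na: "\<not> adj k (insert x I) (?U - {y})" using ST_nadj[OF base x' y] by simp
  show "\<exists>C\<in>NN (adj k) ?W (insert a I) (insert b I).
       \<exists>D\<in>NN (adj k) ?W (insert a I) (insert b I). C \<noteq> D \<and> \<not> adj k C D"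
    apply (rule bexI[OF _ n1])
    apply (rule bexI[OF _ n2])
    using ne na by simp
qed



lemma K_TJ_iff:
  "k \<in> K_TJ (johnson_V n r) (johnson_E n r) \<longleftrightarrow>
   k \<ge> 1 \<and> (\<exists>(VH :: nat set) EH. is_graph VH EH \<and>
     (\<exists>f. bij_betw f (cliques VH EH k) (cliques {1..n} (Kn n) r) \<and>
       (\<forall>x\<in>cliques VH EH k. \<forall>y\<in>cliques VH EH k. adj k x y \<longleftrightarrow> adj r (f x) (f y))))"
proof -
  have jV: "johnson_V n r = TJ_V {1..n} (Kn n) r" unfolding TJ_V_def johnson_V_eq ..
  have jE: "johnson_E n r = TJ_E {1..n} (Kn n) r" by (rule johnson_E_eq)
  show ?thesis unfolding K_TJ_def jV jE graph_iso_TJ by (simp only: mem_Collect_eq)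
qed

lemma onlyif:
  assumes r: "2 \<le> r" "r + 2 \<le> n" and k: "k \<in> K_TJ (johnson_V n r) (johnson_E n r)"
  shows "k = r \<or> k = n - r"
proof -
  obtain VH :: "nat set" and EH f where k1: "k \<ge> 1"
    and bij: "bij_betw f (cliques VH EH k) (cliques {1..n} (Kn n) r)"
    and iso: "\<forall>x\<in>cliques VH EH k. \<forall>y\<in>cliques VH EH k. adj k x y \<longleftrightarrow> adj r (f x) (f y)"
    using k unfolding K_TJ_iff by blast
  define W1 where "W1 = cliques VH EH k"
  define W2 where "W2 = cliques {1..n} (Kn n) r"
  have bij': "bij_betw f W1 W2" and iso': "\<forall>x\<in>W1. \<forall>y\<in>W1. adj k x y \<longleftrightarrow> adj r (f x) (f y)"
    using bij iso unfolding W1_def W2_def by auto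
  have "{1..r} \<subseteq> {1..n}" "card {1..r} = r" using r by auto
  then have A0: "{1..r} \<in> W2" unfolding W2_def cliques_Kn by blast
  have "{2..r+1} \<subseteq> {1..n}" "card {2..r+1} = r" using r by auto
  then have B0: "{2..r+1} \<in> W2" unfolding W2_def cliques_Kn by blast
  have i: "{1..r} \<inter> {2..r+1} = {2..(r::nat)}" by (simp add: Int_atLeastAtMost)
  have c: "card {2..r} = r - 1" by simp
  have ne: "{1..r} \<noteq> {2..r+1}"
  proof
    assume eq: "{1..r} = {2..r+1}"
    have "(1::nat) \<in> {1..r}" using r by simp
    then have "(1::nat) \<in> {2..r+1}" by (simp only: eq)
    then show False by simp
  qed
  have adj0: "adj r {1..r} {2..r+1}" unfolding adj_def i c using ne by (rule conjI) (rule refl)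
  have im: "f ` W1 = W2" using bij' by (simp add: bij_betw_def)
  obtain P Q where PQ: "P \<in> W2" "Q \<in> W2" "adj r P Q" using A0 B0 adj0 by blast
  obtain A where A: "A \<in> W1" "f A = P" using PQ(1) im by (metis imageE)
  obtain B where B: "B \<in> W1" "f B = Q" using PQ(2) im by (metis imageE)
  have adjAB: "adj k A B" using iso' A B PQ(3) by simp
  have cW1: "\<forall>D\<in>W1. card D = k" unfolding W1_def cliques_def by auto
  have cW2: "\<forall>D\<in>W2. card D = r" unfolding W2_def cliques_def by auto
  obtain a b I where base: "a \<notin> I" "b \<notin> I" "a \<noteq> b" "finite I" "card I + 1 = k"
    and AI: "A = insert a I" "B = insert b I"
  proof -
    have "card A = k" "card B = k" using cW1 A(1) B(1) by auto
    from decomp[OF this k1 adjAB] that show ?thesis by blast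
  qed
  have fAW: "f A \<in> W2" "f B \<in> W2" using A(2) B(2) PQ by simp_all
  have adjf: "adj r (f A) (f B)" using PQ A B by simp
  obtain a' b' I' where base': "a' \<notin> I'" "b' \<notin> I'" "a' \<noteq> b'" "finite I'" "card I' + 1 = r"
    and AI': "f A = insert a' I'" "f B = insert b' I'"
  proof -
    have c2: "card (f A) = r" "card (f B) = r" using cW2 fAW by auto
    have r1: "1 \<le> r" using r by simp
    from decomp[OF c2 r1 adjf] that show ?thesis by blast
  qed
  have J: "\<forall>C\<in>NN (adj r) W2 (f A) (f B). card (MM (adj r) W2 (f A) (f B) C) = n - r - 1
         \<or> card (MM (adj r) W2 (f A) (f B) C) = r - 1"
    "\<exists>C\<in>NN (adj r) W2 (f A) (f B). \<exists>D\<in>NN (adj r) W2 (f A) (f B). C \<noteq> D \<and> \<not> adj r C D"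
    using J_side[OF base' _ _ r] fAW unfolding AI' W2_def by auto
  have NNeq: "f ` NN (adj k) W1 A B = NN (adj r) W2 (f A) (f B)"
    by (rule iso_NN[OF bij' iso' A(1) B(1)])
  obtain C2 D2 where CD2: "C2 \<in> NN (adj r) W2 (f A) (f B)" "D2 \<in> NN (adj r) W2 (f A) (f B)"
    "C2 \<noteq> D2" "\<not> adj r C2 D2" using J(2) by blast
  obtain C where C: "C \<in> NN (adj k) W1 A B" "f C = C2" using CD2(1) NNeq by (metis imageE)
  obtain D where D: "D \<in> NN (adj k) W1 A B" "f D = D2" using CD2(2) NNeq by (metis imageE)
  have CW: "C \<in> W1" "D \<in> W1" using C D unfolding NN_def by auto
  have "C \<noteq> D" using C D CD2 by auto
  moreover have "\<not> adj k C D" using iso' CW C D CD2 by simp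
  ultimately obtain C' where C': "C' \<in> NN (adj k) W1 A B" "card (MM (adj k) W1 A B C') = k - 1"
    using TJ_side[OF base, of VH EH C D] A B C D unfolding AI W1_def by auto
  have C'W: "C' \<in> W1" using C' unfolding NN_def by auto
  have "f C' \<in> NN (adj r) W2 (f A) (f B)" using C' NNeq by blast
  moreover have "card (MM (adj r) W2 (f A) (f B) (f C')) = k - 1"
    using iso_card_MM[OF bij' iso' A(1) B(1) C'W] C' by simp
  ultimately have "k - 1 = n - r - 1 \<or> k - 1 = r - 1" using J(1) by metis
  then show ?thesis using k1 r by auto
qed



lemma is_graph_Kn: "is_graph {1..n} (Kn n)"
  unfolding is_graph_def Kn_def by auto

lemma K_r:
  assumes "1 \<le> r"
  shows "r \<in> K_TJ (johnson_V n r) (johnson_E n r)"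
  unfolding K_TJ_iff using assms is_graph_Kn[of n]
  by (intro conjI exI[of _ "{1..n}"] exI[of _ "Kn n"] exI[of _ id]) (auto simp: bij_betw_id)

lemma K_nr:
  assumes "1 \<le> r" "r + 1 \<le> n"
  shows "n - r \<in> K_TJ (johnson_V n r) (johnson_E n r)"
proof -
  let ?W1 = "cliques {1..n} (Kn n) (n - r)"
  let ?W2 = "cliques {1..n} (Kn n) r"
  let ?c = "\<lambda>X. {1..n} - X"
  have c1: "?c X \<in> ?W2" if "X \<in> ?W1" for X
  proof -
    have "X \<subseteq> {1..n}" "card X = n - r" using that unfolding cliques_Kn by auto
    moreover then have "card (?c X) = card {1..n} - card X" by (intro card_Diff_subset) (auto intro: finite_subset)
    ultimately show ?thesis unfolding cliques_Kn using assms by auto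
  qed
  have c2: "?c X \<in> ?W1" if "X \<in> ?W2" for X
  proof -
    have "X \<subseteq> {1..n}" "card X = r" using that unfolding cliques_Kn by auto
    moreover then have "card (?c X) = card {1..n} - card X" by (intro card_Diff_subset) (auto intro: finite_subset)
    ultimately show ?thesis unfolding cliques_Kn using assms by auto
  qed
  have cc: "?c (?c X) = X" if "X \<subseteq> {1..n}" for X using that by auto
  have bij: "bij_betw ?c ?W1 ?W2"
    apply (rule bij_betw_byWitness[where f' = ?c])
    using c1 c2 cc unfolding cliques_Kn by auto
  have iso: "adj (n - r) X Y \<longleftrightarrow> adj r (?c X) (?c Y)" if XY: "X \<in> ?W1" "Y \<in> ?W1" for X Y
  proof -
    have X: "X \<subseteq> {1..n}" "card X = n - r" and Y: "Y \<subseteq> {1..n}" "card Y = n - r"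
      using XY unfolding cliques_Kn by auto
    have fin: "finite X" "finite Y" using X Y finite_subset by auto
    have ne: "X \<noteq> Y \<longleftrightarrow> ?c X \<noteq> ?c Y" using X Y cc by metis
    have e: "?c X \<inter> ?c Y = {1..n} - (X \<union> Y)" by auto
    have "card ({1..n} - (X \<union> Y)) = card {1..n} - card (X \<union> Y)"
      using X Y by (intro card_Diff_subset) (auto intro: finite_subset)
    then have cu: "card (?c X \<inter> ?c Y) = n - card (X \<union> Y)" using e by simp
    have ui: "card (X \<union> Y) + card (X \<inter> Y) = card X + card Y" using card_Un_Int[OF fin] by simp
    have ule: "card (X \<union> Y) \<le> n" using X Y card_mono[of "{1..n}" "X \<union> Y"] by auto
    have ile: "card (X \<inter> Y) \<le> card X" using fin card_mono[of X "X \<inter> Y"] by auto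
    have "card (X \<inter> Y) = n - r - 1 \<longleftrightarrow> card (?c X \<inter> ?c Y) = r - 1"
      using cu ui ule ile X Y assms by linarith
    then show ?thesis unfolding adj_def using ne by blast
  qed
  show ?thesis unfolding K_TJ_iff using assms is_graph_Kn[of n] bij iso
    by (intro conjI exI[of _ "{1..n}"] exI[of _ "Kn n"] exI[of _ ?c]) auto
qed



lemma complete_iso:
  assumes h: "bij_betw h S W1" and g: "bij_betw g S W2"
    and c1: "\<forall>x\<in>W1. \<forall>y\<in>W1. adj k x y \<longleftrightarrow> x \<noteq> y"
    and c2: "\<forall>x\<in>W2. \<forall>y\<in>W2. adj r x y \<longleftrightarrow> x \<noteq> y"
  shows "\<exists>f. bij_betw f W1 W2 \<and> (\<forall>x\<in>W1. \<forall>y\<in>W1. adj k x y \<longleftrightarrow> adj r (f x) (f y))"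
proof -
  let ?f = "g \<circ> inv_into S h"
  have b: "bij_betw ?f W1 W2" using bij_betw_trans[OF bij_betw_inv_into[OF h] g] .
  have "adj k x y \<longleftrightarrow> adj r (?f x) (?f y)" if "x \<in> W1" "y \<in> W1" for x y
  proof -
    have "?f x \<in> W2" "?f y \<in> W2" using b that bij_betw_apply by fast+
    moreover have "x \<noteq> y \<longleftrightarrow> ?f x \<noteq> ?f y" using b that unfolding bij_betw_def inj_on_def by blast
    ultimately show ?thesis using c1 c2 that by simp
  qed
  then show ?thesis using b by blast
qed

lemma Kc_cliques:
  fixes n k :: nat
  assumes k: "k \<ge> 1"
  defines "Kc \<equiv> {n+1..n+k-1}" and "VH \<equiv> {1..n+k-1}"
  defines "EH \<equiv> {e. e \<subseteq> VH \<and> card e = 2 \<and> e \<inter> Kc \<noteq> {}}"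
  shows "cliques VH EH k = (\<lambda>i. insert i Kc) ` {1..n}"
proof
  have cK: "card Kc = k - 1" unfolding Kc_def by simp
  have fK: "finite Kc" unfolding Kc_def by simp
  have VU: "VH = {1..n} \<union> Kc" unfolding VH_def Kc_def using k by auto
  have dj: "{1..n} \<inter> Kc = {}" unfolding Kc_def by auto
  show "cliques VH EH k \<subseteq> (\<lambda>i. insert i Kc) ` {1..n}"
  proof
    fix D assume "D \<in> cliques VH EH k"
    then have D: "D \<subseteq> VH" "card D = k" "\<forall>x\<in>D. \<forall>y\<in>D. x \<noteq> y \<longrightarrow> {x, y} \<in> EH"
      unfolding cliques_def by auto
    let ?L = "D \<inter> {1..n}"
    have "\<forall>i\<in>?L. \<forall>j\<in>?L. i = j"
    proof (intro ballI, rule ccontr)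
      fix i j assume ij: "i \<in> ?L" "j \<in> ?L" "i \<noteq> j"
      then have "{i, j} \<in> EH" using D by blast
      then have "{i, j} \<inter> Kc \<noteq> {}" unfolding EH_def by blast
      then show False using ij dj by blast
    qed
    moreover have "finite ?L" by simp
    ultimately have L1: "card ?L \<le> 1" using card_le_Suc0_iff_eq[of ?L] by simp
    have DU: "D = ?L \<union> (D \<inter> Kc)" using D(1) VU by blast
    have "card D \<le> card ?L + card (D \<inter> Kc)" using DU card_Un_le by metis
    moreover have "card (D \<inter> Kc) \<le> k - 1" using cK fK card_mono[of Kc "D \<inter> Kc"] by auto
    ultimately have cL: "card ?L = 1" and cDK: "card (D \<inter> Kc) = k - 1" using L1 D(2) k by linarith+
    obtain i where i: "?L = {i}" using cL card_1_singletonE by blast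
    have "D \<inter> Kc = Kc" using cDK cK fK by (intro card_subset_eq) auto
    then have "D = insert i Kc" using DU i by auto
    moreover have "i \<in> {1..n}" using i by auto
    ultimately show "D \<in> (\<lambda>i. insert i Kc) ` {1..n}" by blast
  qed
  show "(\<lambda>i. insert i Kc) ` {1..n} \<subseteq> cliques VH EH k"
  proof
    fix D assume "D \<in> (\<lambda>i. insert i Kc) ` {1..n}"
    then obtain i where i: "i \<in> {1..n}" "D = insert i Kc" by blast
    have iK: "i \<notin> Kc" using i dj by blast
    have "D \<subseteq> VH" using i VU by auto
    moreover have "card D = k" using i iK cK fK k by simp
    moreover have "{x, y} \<in> EH" if "x \<in> D" "y \<in> D" "x \<noteq> y" for x y
    proof -
      have "x \<in> Kc \<or> y \<in> Kc" using that i by auto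
      moreover have "{x, y} \<subseteq> VH" using that \<open>D \<subseteq> VH\<close> by auto
      moreover have "card {x, y} = 2" using that by simp
      ultimately show ?thesis unfolding EH_def by blast
    qed
    ultimately show "D \<in> cliques VH EH k" unfolding cliques_def by blast
  qed
qed



lemma s1_case:
  assumes n: "n \<ge> 2" and r: "r = 1 \<or> r = n - 1" and k: "k \<ge> 1"
  shows "k \<in> K_TJ (johnson_V n r) (johnson_E n r)"
proof -
  define Kc where "Kc = {n+1..n+k-1}"
  define VH where "VH = {1..n+k-1}"
  define EH where "EH = {e. e \<subseteq> VH \<and> card e = 2 \<and> e \<inter> Kc \<noteq> {}}"
  have W1: "cliques VH EH k = (\<lambda>i. insert i Kc) ` {1..n}"
    unfolding Kc_def VH_def EH_def by (rule Kc_cliques[OF k])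
  have cK: "card Kc = k - 1" unfolding Kc_def by simp
  have fK: "finite Kc" unfolding Kc_def by simp
  have dj: "{1..n} \<inter> Kc = {}" unfolding Kc_def by auto
  have gr: "is_graph VH EH" unfolding is_graph_def EH_def VH_def by auto
  have h: "bij_betw (\<lambda>i. insert i Kc) {1..n} (cliques VH EH k)"
    unfolding W1 bij_betw_def inj_on_def using dj by blast
  have c1: "\<forall>x\<in>cliques VH EH k. \<forall>y\<in>cliques VH EH k. adj k x y \<longleftrightarrow> x \<noteq> y"
  proof (intro ballI)
    fix x y assume "x \<in> cliques VH EH k" "y \<in> cliques VH EH k"
    then obtain i j where ij: "i \<in> {1..n}" "j \<in> {1..n}" "x = insert i Kc" "y = insert j Kc"
      unfolding W1 by blast
    show "adj k x y \<longleftrightarrow> x \<noteq> y"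
    proof (cases "i = j")
      case True then show ?thesis using ij unfolding adj_def by simp
    next
      case False
      then have "x \<inter> y = Kc" "x \<noteq> y" using ij dj by auto
      then show ?thesis unfolding adj_def using cK by simp
    qed
  qed
  have "\<exists>g. bij_betw g {1..n} (cliques {1..n} (Kn n) r) \<and>
        (\<forall>x\<in>cliques {1..n} (Kn n) r. \<forall>y\<in>cliques {1..n} (Kn n) r. adj r x y \<longleftrightarrow> x \<noteq> y)"
  proof (cases "r = 1")
    case True
    have W2: "cliques {1..n} (Kn n) r = (\<lambda>i. {i}) ` {1..n}"
    proof
      show "cliques {1..n} (Kn n) r \<subseteq> (\<lambda>i. {i}) ` {1..n}"
      proof
        fix D assume "D \<in> cliques {1..n} (Kn n) r"
        then have "D \<subseteq> {1..n}" "card D = 1" unfolding cliques_Kn using True by auto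
        then show "D \<in> (\<lambda>i. {i}) ` {1..n}" by (metis card_1_singletonE image_eqI insert_subset)
      qed
      show "(\<lambda>i. {i}) ` {1..n} \<subseteq> cliques {1..n} (Kn n) r" unfolding cliques_Kn using True by auto
    qed
    have "bij_betw (\<lambda>i. {i}) {1..n} (cliques {1..n} (Kn n) r)"
      unfolding W2 bij_betw_def inj_on_def by blast
    moreover have "\<forall>x\<in>cliques {1..n} (Kn n) r. \<forall>y\<in>cliques {1..n} (Kn n) r. adj r x y \<longleftrightarrow> x \<noteq> y"
      unfolding W2 adj_def using True by auto
    ultimately show ?thesis by blast
  next
    case False
    then have rn: "r = n - 1" using r by simp
    let ?g = "\<lambda>i. {1..n} - {i}"
    have W2: "cliques {1..n} (Kn n) r = ?g ` {1..n}"
    proof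
      show "cliques {1..n} (Kn n) r \<subseteq> ?g ` {1..n}"
      proof
        fix D assume "D \<in> cliques {1..n} (Kn n) r"
        then have D: "D \<subseteq> {1..n}" "card D = n - 1" unfolding cliques_Kn using rn by auto
        then have "card ({1..n} - D) = card {1..n} - card D" by (intro card_Diff_subset) (auto intro: finite_subset)
        then have "card ({1..n} - D) = 1" using D n by simp
        then obtain i where i: "{1..n} - D = {i}" using card_1_singletonE by blast
        then have "D = ?g i" "i \<in> {1..n}" using D by auto
        then show "D \<in> ?g ` {1..n}" by blast
      qed
      show "?g ` {1..n} \<subseteq> cliques {1..n} (Kn n) r"
      proof
        fix D assume "D \<in> ?g ` {1..n}"
        then obtain i where i: "i \<in> {1..n}" "D = ?g i" by blast
        then have "card D = n - 1" by (simp add: card_Diff_singleton)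
        then show "D \<in> cliques {1..n} (Kn n) r" unfolding cliques_Kn using i rn by auto
      qed
    qed
    have gne: "?g i \<noteq> ?g j" if "i \<in> {1..n}" "i \<noteq> j" for i j
    proof -
      have "i \<in> ?g j" "i \<notin> ?g i" using that by auto
      then show ?thesis by blast
    qed
    have "inj_on ?g {1..n}" unfolding inj_on_def using gne by blast
    then have "bij_betw ?g {1..n} (cliques {1..n} (Kn n) r)"
      unfolding W2 bij_betw_def by simp
    moreover have "\<forall>x\<in>cliques {1..n} (Kn n) r. \<forall>y\<in>cliques {1..n} (Kn n) r. adj r x y \<longleftrightarrow> x \<noteq> y"
    proof (intro ballI)
      fix x y assume "x \<in> cliques {1..n} (Kn n) r" "y \<in> cliques {1..n} (Kn n) r"
      then obtain i j where ij: "i \<in> {1..n}" "j \<in> {1..n}" "x = ?g i" "y = ?g j"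
        unfolding W2 by blast
      show "adj r x y \<longleftrightarrow> x \<noteq> y"
      proof (cases "i = j")
        case True then show ?thesis using ij unfolding adj_def by simp
      next
        case False
        have e: "x \<inter> y = {1..n} - {i, j}" using ij by auto
        have "card ({1..n} - {i, j}) = card {1..n} - card {i, j}"
          using ij by (intro card_Diff_subset) auto
        then have "card (x \<inter> y) = r - 1" using e False rn by simp
        moreover have "x \<noteq> y" using ij False gne by simp
        ultimately show ?thesis unfolding adj_def by simp
      qed
    qed
    ultimately show ?thesis by blast
  qed
  then obtain g where g: "bij_betw g {1..n} (cliques {1..n} (Kn n) r)"
    and c2: "\<forall>x\<in>cliques {1..n} (Kn n) r. \<forall>y\<in>cliques {1..n} (Kn n) r. adj r x y \<longleftrightarrow> x \<noteq> y" by blast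
  show ?thesis unfolding K_TJ_iff using k gr complete_iso[OF h g c1 c2] by blast
qed

theorem theorem4p14:
  fixes n r s :: nat
  assumes "n \<ge> 2" and "1 \<le> r" and "r \<le> n - 1"
    and "s = min r (n - r)"
  shows "K_TJ (johnson_V n r) (johnson_E n r) =
           (if s = 1 then {k. k \<ge> 1}
            else if n = 2 * s then {s}
            else {s, n - s})"
proof (cases "s = 1")
  case True
  then have r1: "r = 1 \<or> r = n - 1" using assms by (auto simp: min_def split: if_splits)
  have "K_TJ (johnson_V n r) (johnson_E n r) = {k. k \<ge> 1}"
  proof
    show "K_TJ (johnson_V n r) (johnson_E n r) \<subseteq> {k. k \<ge> 1}" unfolding K_TJ_def by auto
    show "{k. k \<ge> 1} \<subseteq> K_TJ (johnson_V n r) (johnson_E n r)" using s1_case[OF assms(1) r1] by auto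
  qed
  then show ?thesis using True by simp
next
  case False
  then have r2: "2 \<le> r" "r + 2 \<le> n" using assms by (auto simp: min_def split: if_splits)
  have "K_TJ (johnson_V n r) (johnson_E n r) = {r, n - r}"
  proof
    show "K_TJ (johnson_V n r) (johnson_E n r) \<subseteq> {r, n - r}" using onlyif[OF r2] by blast
    show "{r, n - r} \<subseteq> K_TJ (johnson_V n r) (johnson_E n r)"
      using K_r[of r n] K_nr[of r n] r2 by auto
  qed
  moreover have "{r, n - r} = (if n = 2 * s then {s} else {s, n - s})"
  proof (cases "r \<le> n - r")
    case True
    then have "s = r" "n - s = n - r" using assms by (simp_all add: min_def)
    moreover have "n = 2 * s \<Longrightarrow> n - r = r" using \<open>s = r\<close> by simp
    ultimately show ?thesis by auto
  next
    case False
    then have "s = n - r" "n - s = r" using assms by (simp_all add: min_def)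
    moreover have "n = 2 * s \<Longrightarrow> n - r = r" using \<open>s = n - r\<close> assms(3) by linarith
    ultimately show ?thesis by auto
  qed
  ultimately show ?thesis using False by simp
qed


end
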